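(* Let $p_1,p_2,p_3,p_4>0$ with $\Delta:=p_1p_4-p_2p_3\neq0$, $S=p_1+p_2+p_3+p_4$, and let $u_1,u_2,v_1,v_2$ be given by \[ u_1=\frac{(p_1+p_2)(p_1+p_3)}{p_1S},\quad u_2=\frac{(p_1+p_2)(p_2+p_4)}{p_2S},\quad v_1=\frac{(p_1+p_3)(p_3+p_4)}{p_3S},\quad v_2=\frac{(p_2+p_4)(p_3+p_4)}{p_4S}. \] Let $N$ be a nonnegative integer and let $P_{m_1,m_2}(x_1,x_2)$ be formed with these $u$'s and $v$'s. Then for all nonnegative integers $x_1,x_2$ with $x_1+x_2\le N$ and $m_1,m_2$ with $m_1+m_2\le N$ (terms whose coefficient $N-m_1-m_2$, $m_1$, or $m_2$ vanishes being omitted), \begin{align*} &(N-m_1-m_2)\Big\{\frac{p_1p_3(p_2+p_4)S}{(p_1+p_3)\Delta}\big(P_{m_1+1,m_2}-P_{m_1,m_2}\big)-\frac{p_2p_4(p_1+p_3)S}{(p_2+p_4)\Delta}\big(P_{m_1,m_2+1}-P_{m_1,m_2}\big)\Big\}\\ &\quad+m_1\frac{\Delta}{p_1+p_3}\big(P_{m_1-1,m_2}-P_{m_1,m_2}\big)-m_2\frac{\Delta}{p_2+p_4}\big(P_{m_1,m_2-1}-P_{m_1,m_2}\big)\\ &=\big((p_1+p_2)x_1-(p_3+p_4)x_2\big)P_{m_1,m_2}(x_1,x_2), \end{align*} where every $P$ is evaluated at $(x_1,x_2)$.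
   Context: Notation: $(a)_k=a(a+1)\cdots(a+k-1)$, $(a)_0=1$, is the Pochhammer symbol. For a nonnegative integer $N$, nonnegative integers $m_1,m_2,x_1,x_2$ with $x_1+x_2\le N$, and parameters $u_1,v_1,u_2,v_2$, define \[ P_{m_1,m_2}(x_1,x_2)=\sum_{\substack{i,j,k,l\ge 0\\ i+j+k+l\le N}}\frac{(-m_1)_{i+j}(-m_2)_{k+l}(-x_1)_{i+k}(-x_2)_{j+l}}{i!\,j!\,k!\,l!\,(-N)_{i+j+k+l}}\,u_1^i v_1^j u_2^k v_2^l . \] *)

theory Defs
  imports Complex_Main
begin

definition Pbiv :: "nat \<Rightarrow> real \<Rightarrow> real \<Rightarrow> real \<Rightarrow> real \<Rightarrow> nat \<Rightarrow> nat \<Rightarrow> nat \<Rightarrow> nat \<Rightarrow> real" where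
  "Pbiv N u1 v1 u2 v2 m1 m2 x1 x2 =
     (\<Sum>(i,j,k,l)\<in>{(i,j,k,l). i + j + k + l \<le> N}.
        pochhammer (- real m1) (i + j) * pochhammer (- real m2) (k + l)
        * pochhammer (- real x1) (i + k) * pochhammer (- real x2) (j + l)
        / (fact i * fact j * fact k * fact l * pochhammer (- real N) (i + j + k + l))
        * u1 ^ i * v1 ^ j * u2 ^ k * v2 ^ l)"

end

theory Submission
  imports Defs
begin


definition cc :: "nat \<Rightarrow> real \<Rightarrow> real \<Rightarrow> nat \<Rightarrow> nat \<Rightarrow> real" where
  "cc x u w i k = pochhammer (- real x) (i + k) * u ^ i * w ^ k / (fact i * fact k)"

definition BS :: "nat \<Rightarrow> (nat \<Rightarrow> nat \<Rightarrow> nat \<Rightarrow> nat \<Rightarrow> real) \<Rightarrow> real" where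
  "BS R F = (\<Sum>i<R. \<Sum>j<R. \<Sum>k<R. \<Sum>l<R. F i j k l)"

lemma cc_zero: "x < i + k \<Longrightarrow> cc x u w i k = 0"
  by (simp add: cc_def pochhammer_of_nat_eq_0_iff)

lemma cc_Suc1: "(1 + real i) * cc x u w (Suc i) k = u * (real (i+k) - real x) * cc x u w i k"
proof -
  have f: "(fact (Suc i)::real) = (1 + real i) * fact i" by (simp add: algebra_simps)
  have p: "pochhammer (- real x) (Suc i + k) = pochhammer (- real x) (i+k) * (- real x + real (i+k))"
    using pochhammer_Suc[of "- real x" "i+k"] by simp
  have n: "1 + real i \<noteq> 0" by linarith
  have "(1 + real i) * cc x u w (Suc i) k = (1 + real i) * (pochhammer (- real x) (i+k) * (- real x + real (i+k)) * (u * u ^ i) * w ^ k / ((1 + real i) * fact i * fact k))"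
    unfolding cc_def f p by simp
  also have "\<dots> = pochhammer (- real x) (i+k) * (- real x + real (i+k)) * (u * u ^ i) * w ^ k / (fact i * fact k)"
    using n by (simp add: mult.assoc)
  also have "\<dots> = u * (real (i+k) - real x) * cc x u w i k" unfolding cc_def by (simp add: algebra_simps)
  finally show ?thesis .
qed

lemma cc_Suc2: "(1 + real k) * cc x u w i (Suc k) = w * (real (i+k) - real x) * cc x u w i k"
proof -
  have f: "(fact (Suc k)::real) = (1 + real k) * fact k" by (simp add: algebra_simps)
  have p: "pochhammer (- real x) (i + Suc k) = pochhammer (- real x) (i+k) * (- real x + real (i+k))"
    using pochhammer_Suc[of "- real x" "i+k"] by simp
  have n: "1 + real k \<noteq> 0" by linarith
  have "(1 + real k) * cc x u w i (Suc k) = (1 + real k) * (pochhammer (- real x) (i+k) * (- real x + real (i+k)) * u ^ i * (w * w ^ k) / ((1 + real k) * fact i * fact k))"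
    unfolding cc_def f p by (simp add: mult_ac)
  also have "\<dots> = pochhammer (- real x) (i+k) * (- real x + real (i+k)) * u ^ i * (w * w ^ k) / (fact i * fact k)"
    using n by (simp add: mult.assoc)
  also have "\<dots> = w * (real (i+k) - real x) * cc x u w i k" unfolding cc_def by (simp add: algebra_simps)
  finally show ?thesis .
qed

lemma cc_zeroR: "x < R \<Longrightarrow> cc x u w R k = 0" "x < R \<Longrightarrow> cc x u w i R = 0"
  by (simp_all add: cc_zero)

lemma aux_fs: "(a::real) \<noteq> 0 \<Longrightarrow> b \<noteq> 0 \<Longrightarrow> c \<noteq> 0 \<Longrightarrow> w \<noteq> 0 \<Longrightarrow>
   P * (u * U) * W / (a * b) = u / w * (c * (P * U * (w * W) / (a * (c * b))))"
  by (simp add: field_simps)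

lemma cc_swap: "w \<noteq> 0 \<Longrightarrow> (1 + real i) * cc x u w (Suc i) k = u / w * (1 + real k) * cc x u w i (Suc k)"
proof -
  assume w: "w \<noteq> 0"
  have f: "(fact (Suc i)::real) = (1 + real i) * fact i" by (simp add: algebra_simps)
  have f2: "(fact (Suc k)::real) = (1 + real k) * fact k" by (simp add: algebra_simps)
  have n: "1 + real i \<noteq> 0" "1 + real k \<noteq> 0" by linarith+
  have e: "Suc i + k = i + Suc k" by simp
  have "(1 + real i) * cc x u w (Suc i) k = (1 + real i) * (pochhammer (- real x) (i + Suc k) * (u * u ^ i) * w ^ k / ((1 + real i) * fact i * fact k))"
    unfolding cc_def f e by simp
  also have "\<dots> = pochhammer (- real x) (i + Suc k) * (u * u ^ i) * w ^ k / (fact i * fact k)"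
    using n by (simp add: mult.assoc)
  also have "\<dots> = u / w * ((1 + real k) * (pochhammer (- real x) (i + Suc k) * u ^ i * (w * w ^ k) / (fact i * ((1 + real k) * fact k))))"
    using aux_fs[of "fact i" "fact k" "1 + real k" w] n w by simp
  also have "\<dots> = u / w * (1 + real k) * cc x u w i (Suc k)" unfolding cc_def f2 by simp
  finally show ?thesis .
qed

lemma cc_swap2: "w \<noteq> 0 \<Longrightarrow> u \<noteq> 0 \<Longrightarrow> w / u * (1 + real i) * cc x u w (Suc i) k = (1 + real k) * cc x u w i (Suc k)"
  using cc_swap[of w i x u k] by (simp add: mult.assoc)

lemma sum_shift: "f 0 = (0::real) \<Longrightarrow> f R = 0 \<Longrightarrow> (\<Sum>i<R. f i) = (\<Sum>i<R. f (Suc i))"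
  by (metis add.commute add_0 sum.lessThan_Suc sum.lessThan_Suc_shift)

lemma BS_cong: "(\<And>i j k l. F i j k l = G i j k l) \<Longrightarrow> BS R F = BS R G"
  unfolding BS_def by simp

lemma S1: "(\<And>j k l. F 0 j k l = 0) \<Longrightarrow> (\<And>j k l. F R j k l = 0) \<Longrightarrow> BS R F = BS R (\<lambda>i. F (Suc i))"
  unfolding BS_def by (rule sum_shift) simp_all

lemma S2: "(\<And>i k l. F i 0 k l = 0) \<Longrightarrow> (\<And>i k l. F i R k l = 0) \<Longrightarrow> BS R F = BS R (\<lambda>i j. F i (Suc j))"
  unfolding BS_def by (intro sum.cong refl sum_shift) simp_all

lemma S3: "(\<And>i j l. F i j 0 l = 0) \<Longrightarrow> (\<And>i j l. F i j R l = 0) \<Longrightarrow> BS R F = BS R (\<lambda>i j k. F i j (Suc k))"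
  unfolding BS_def by (intro sum.cong refl sum_shift) simp_all

lemma S4: "(\<And>i j k. F i j k 0 = 0) \<Longrightarrow> (\<And>i j k. F i j k R = 0) \<Longrightarrow> BS R F = BS R (\<lambda>i j k l. F i j k (Suc l))"
  unfolding BS_def by (intro sum.cong refl sum_shift) simp_all

lemma GI: assumes "x < R"
  shows "BS R (\<lambda>i j k l. real i * cc x u w i k * H (i - 1) j k l)
       = BS R (\<lambda>i j k l. u * (real (i+k) - real x) * cc x u w i k * H i j k l)"
proof -
  have "BS R (\<lambda>i j k l. real i * cc x u w i k * H (i - 1) j k l)
      = BS R (\<lambda>i j k l. real (Suc i) * cc x u w (Suc i) k * H (Suc i - 1) j k l)"
    by (rule S1) (simp_all add: cc_zeroR assms)
  also have "\<dots> = BS R (\<lambda>i j k l. u * (real (i+k) - real x) * cc x u w i k * H i j k l)"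
    by (rule BS_cong) (simp add: cc_Suc1)
  finally show ?thesis .
qed

lemma GJ: assumes "x < R"
  shows "BS R (\<lambda>i j k l. real j * cc x u w j l * H i (j - 1) k l)
       = BS R (\<lambda>i j k l. u * (real (j+l) - real x) * cc x u w j l * H i j k l)"
proof -
  have "BS R (\<lambda>i j k l. real j * cc x u w j l * H i (j - 1) k l)
      = BS R (\<lambda>i j k l. real (Suc j) * cc x u w (Suc j) l * H i (Suc j - 1) k l)"
    by (rule S2) (simp_all add: cc_zeroR assms)
  also have "\<dots> = BS R (\<lambda>i j k l. u * (real (j+l) - real x) * cc x u w j l * H i j k l)"
    by (rule BS_cong) (simp add: cc_Suc1)
  finally show ?thesis .
qed

lemma GK: assumes "x < R"
  shows "BS R (\<lambda>i j k l. real k * cc x u w i k * H i j (k - 1) l)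
       = BS R (\<lambda>i j k l. w * (real (i+k) - real x) * cc x u w i k * H i j k l)"
proof -
  have "BS R (\<lambda>i j k l. real k * cc x u w i k * H i j (k - 1) l)
      = BS R (\<lambda>i j k l. real (Suc k) * cc x u w i (Suc k) * H i j (Suc k - 1) l)"
    by (rule S3) (simp_all add: cc_zeroR assms)
  also have "\<dots> = BS R (\<lambda>i j k l. w * (real (i+k) - real x) * cc x u w i k * H i j k l)"
    by (rule BS_cong) (simp add: cc_Suc2)
  finally show ?thesis .
qed

lemma GL: assumes "x < R"
  shows "BS R (\<lambda>i j k l. real l * cc x u w j l * H i j k (l - 1))
       = BS R (\<lambda>i j k l. w * (real (j+l) - real x) * cc x u w j l * H i j k l)"
proof -
  have "BS R (\<lambda>i j k l. real l * cc x u w j l * H i j k (l - 1))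
      = BS R (\<lambda>i j k l. real (Suc l) * cc x u w j (Suc l) * H i j k (Suc l - 1))"
    by (rule S4) (simp_all add: cc_zeroR assms)
  also have "\<dots> = BS R (\<lambda>i j k l. w * (real (j+l) - real x) * cc x u w j l * H i j k l)"
    by (rule BS_cong) (simp add: cc_Suc2)
  finally show ?thesis .
qed

lemma GIK: assumes "x < R" "w \<noteq> 0"
  shows "BS R (\<lambda>i j k l. real i * cc x u w i k * H (i - 1) j (Suc k) l)
       = BS R (\<lambda>i j k l. u / w * real k * cc x u w i k * H i j k l)"
proof -
  have "BS R (\<lambda>i j k l. real i * cc x u w i k * H (i - 1) j (Suc k) l)
      = BS R (\<lambda>i j k l. real (Suc i) * cc x u w (Suc i) k * H (Suc i - 1) j (Suc k) l)"
    by (rule S1) (simp_all add: cc_zeroR assms)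
  also have "\<dots> = BS R (\<lambda>i j k l. u / w * real (Suc k) * cc x u w i (Suc k) * H i j (Suc k) l)"
    by (rule BS_cong) (simp add: cc_swap assms)
  also have "\<dots> = BS R (\<lambda>i j k l. u / w * real k * cc x u w i k * H i j k l)"
    by (rule S3[symmetric]) (simp_all add: cc_zeroR assms)
  finally show ?thesis .
qed

lemma GKI: assumes "x < R" "w \<noteq> 0" "u \<noteq> 0"
  shows "BS R (\<lambda>i j k l. real k * cc x u w i k * H (Suc i) j (k - 1) l)
       = BS R (\<lambda>i j k l. w / u * real i * cc x u w i k * H i j k l)"
proof -
  have "BS R (\<lambda>i j k l. real k * cc x u w i k * H (Suc i) j (k - 1) l)
      = BS R (\<lambda>i j k l. real (Suc k) * cc x u w i (Suc k) * H (Suc i) j (Suc k - 1) l)"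
    by (rule S3) (simp_all add: cc_zeroR assms)
  also have "\<dots> = BS R (\<lambda>i j k l. w / u * real (Suc i) * cc x u w (Suc i) k * H (Suc i) j k l)"
    by (rule BS_cong) (use cc_swap2[OF assms(2,3)] in \<open>simp add: mult.assoc\<close>)
  also have "\<dots> = BS R (\<lambda>i j k l. w / u * real i * cc x u w i k * H i j k l)"
    by (rule S1[symmetric]) (simp_all add: cc_zeroR assms)
  finally show ?thesis .
qed

lemma GJL: assumes "x < R" "w \<noteq> 0"
  shows "BS R (\<lambda>i j k l. real j * cc x u w j l * H i (j - 1) k (Suc l))
       = BS R (\<lambda>i j k l. u / w * real l * cc x u w j l * H i j k l)"
proof -
  have "BS R (\<lambda>i j k l. real j * cc x u w j l * H i (j - 1) k (Suc l))
      = BS R (\<lambda>i j k l. real (Suc j) * cc x u w (Suc j) l * H i (Suc j - 1) k (Suc l))"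
    by (rule S2) (simp_all add: cc_zeroR assms)
  also have "\<dots> = BS R (\<lambda>i j k l. u / w * real (Suc l) * cc x u w j (Suc l) * H i j k (Suc l))"
    by (rule BS_cong) (simp add: cc_swap assms)
  also have "\<dots> = BS R (\<lambda>i j k l. u / w * real l * cc x u w j l * H i j k l)"
    by (rule S4[symmetric]) (simp_all add: cc_zeroR assms)
  finally show ?thesis .
qed

lemma GLJ: assumes "x < R" "w \<noteq> 0" "u \<noteq> 0"
  shows "BS R (\<lambda>i j k l. real l * cc x u w j l * H i (Suc j) k (l - 1))
       = BS R (\<lambda>i j k l. w / u * real j * cc x u w j l * H i j k l)"
proof -
  have "BS R (\<lambda>i j k l. real l * cc x u w j l * H i (Suc j) k (l - 1))
      = BS R (\<lambda>i j k l. real (Suc l) * cc x u w j (Suc l) * H i (Suc j) k (Suc l - 1))"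
    by (rule S4) (simp_all add: cc_zeroR assms)
  also have "\<dots> = BS R (\<lambda>i j k l. w / u * real (Suc j) * cc x u w (Suc j) l * H i (Suc j) k l)"
    by (rule BS_cong) (use cc_swap2[OF assms(2,3)] in \<open>simp add: mult.assoc\<close>)
  also have "\<dots> = BS R (\<lambda>i j k l. w / u * real j * cc x u w j l * H i j k l)"
    by (rule S2[symmetric]) (simp_all add: cc_zeroR assms)
  finally show ?thesis .
qed



lemma cart4: "(\<Sum>i\<in>A. \<Sum>j\<in>B. \<Sum>k\<in>C. \<Sum>l\<in>D. g (i,j,k,l)) = sum g (A \<times> B \<times> C \<times> D)"
  by (simp add: sum.cartesian_product)

lemma Pbiv_BS: "Pbiv N u1 v1 u2 v2 m1 m2 x1 x2 = BS (Suc N) (\<lambda>i j k l. pochhammer (- real m1) (i+j) * pochhammer (- real m2) (k+l) * cc x1 u1 u2 i k * cc x2 v1 v2 j l / pochhammer (- real N) (i+j+k+l))"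
proof -
  define f where "f = (\<lambda>(i,j,k,l). pochhammer (- real m1) (i + j) * pochhammer (- real m2) (k + l)
        * pochhammer (- real x1) (i + k) * pochhammer (- real x2) (j + l)
        / (fact i * fact j * fact k * fact l * pochhammer (- real N) (i + j + k + l))
        * u1 ^ i * v1 ^ j * u2 ^ k * v2 ^ l)"
  have sub: "{(i,j,k,l). i + j + k + l \<le> N} \<subseteq> {..<Suc N} \<times> {..<Suc N} \<times> {..<Suc N} \<times> {..<Suc N}" by auto
  have "Pbiv N u1 v1 u2 v2 m1 m2 x1 x2 = sum f {(i,j,k,l). i + j + k + l \<le> N}"
    unfolding Pbiv_def f_def by simp
  also have "\<dots> = sum f ({..<Suc N} \<times> {..<Suc N} \<times> {..<Suc N} \<times> {..<Suc N})"
    by (rule sum.mono_neutral_left) (use sub in \<open>auto simp: f_def pochhammer_of_nat_eq_0_iff\<close>)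
  also have "\<dots> = (\<Sum>i<Suc N. \<Sum>j<Suc N. \<Sum>k<Suc N. \<Sum>l<Suc N. f (i,j,k,l))"
    by (rule cart4[symmetric])
  also have "\<dots> = BS (Suc N) (\<lambda>i j k l. pochhammer (- real m1) (i+j) * pochhammer (- real m2) (k+l) * cc x1 u1 u2 i k * cc x2 v1 v2 j l / pochhammer (- real N) (i+j+k+l))"
    unfolding BS_def
    by (intro sum.cong refl) (simp add: f_def cc_def field_simps)
  finally show ?thesis .
qed

lemma PD1: "pochhammer (- (z + 1)) a - pochhammer (- z) a = - real a * pochhammer (- z::real) (a - 1)"
proof (cases a)
  case (Suc b)
  have 1: "pochhammer (- (z + 1)) (Suc b) = (- (z + 1)) * pochhammer (- z) b"
    using pochhammer_rec[of "- (z+1)" b] by simp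
  have 2: "pochhammer (- z) (Suc b) = pochhammer (- z) b * (- z + real b)"
    using pochhammer_Suc[of "- z" b] by simp
  show ?thesis unfolding Suc 1 2 by (simp add: algebra_simps)
qed simp

lemma PD2: "real m * (pochhammer (- real (m - 1)) a - pochhammer (- real m) a) = - real a * pochhammer (- real m) a"
proof (cases m)
  case 0 thus ?thesis by (cases a) (simp_all add: pochhammer_0_left)
next
  case (Suc m')
  show ?thesis
  proof (cases a)
    case (Suc b)
    have d: "pochhammer (- (real m' + 1)) a - pochhammer (- real m') a = - real a * pochhammer (- real m') b"
      using PD1[of "real m'" a] Suc by simp
    have r: "pochhammer (- (real m' + 1)) a = - (real m' + 1) * pochhammer (- real m') b"
      using pochhammer_rec[of "- (real m'+1)" b] Suc by simp
    have mm: "real m = real m' + 1" "real (m - 1) = real m'" using \<open>m = Suc m'\<close> by simp_all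
    have "real m * (pochhammer (- real (m - 1)) a - pochhammer (- real m) a)
        = (real m' + 1) * (- (pochhammer (- (real m' + 1)) a - pochhammer (- real m') a))"
      unfolding mm by (simp add: algebra_simps)
    also have "\<dots> = (real m' + 1) * real a * pochhammer (- real m') b" unfolding d by simp
    also have "\<dots> = - real a * pochhammer (- real m) a" unfolding mm r by (simp add: algebra_simps)
    finally show ?thesis .
  qed simp
qed

lemma SPL: "real a * (c - A - B) * pochhammer (-A) (a - 1) * pochhammer (-B) b
  = real a * ((c - real a - real b + 1) * pochhammer (-A) (a - 1) * pochhammer (-B) b
      + pochhammer (-A) a * pochhammer (-B) b + pochhammer (-A) (a - 1) * pochhammer (-B) (Suc b))"
proof (cases a)
  case (Suc a')
  show ?thesis unfolding Suc by (simp add: pochhammer_Suc algebra_simps)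
qed simp

lemma DL: assumes "N \<le> n \<Longrightarrow> Y = 0"
  shows "Y * (real N - real n) / pochhammer (- real N) (Suc n) = - Y / pochhammer (- real N :: real) n"
proof (cases "N \<le> n")
  case True thus ?thesis using assms by simp
next
  case False
  hence nz: "pochhammer (- real N :: real) n \<noteq> 0" by (simp add: pochhammer_of_nat_eq_0_iff)
  have nz2: "real n - real N \<noteq> 0" using False by simp
  have e: "pochhammer (- real N) (Suc n) = pochhammer (- real N) n * (real n - real N)"
    by (simp add: pochhammer_Suc)
  show ?thesis unfolding e using nz nz2 by (simp add: field_simps)
qed



lemma BS_add: "BS R (\<lambda>i j k l. F i j k l + G i j k l) = BS R F + BS R G"
  unfolding BS_def by (simp add: sum.distrib)
lemma BS_diff: "BS R (\<lambda>i j k l. F i j k l - G i j k l) = BS R F - BS R G"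
  unfolding BS_def by (simp add: sum_subtractf)
lemma BS_cmult: "BS R (\<lambda>i j k l. c * F i j k l) = c * BS R F"
  unfolding BS_def by (simp add: sum_distrib_left)
lemma BS_uminus: "BS R (\<lambda>i j k l. - F i j k l) = - BS R F"
  unfolding BS_def by (simp add: sum_negf)

lemma core:
  fixes N m1 m2 x1 x2 :: nat and u1 u2 v1 v2 al ga be de K1 K2 :: real and P
  assumes nz: "u1 \<noteq> 0" "u2 \<noteq> 0" "v1 \<noteq> 0" "v2 \<noteq> 0"
    and xN: "x1 + x2 \<le> N" and mN: "m1 + m2 \<le> N"
    and h1: "- al * u1 + ga * u2 = K1" and h2: "- al * v1 + ga * v2 = - K2"
    and h3: "al * u1 - al - ga * u2 + ga * u2 / u1 - be = 0"
    and h4: "al * v1 - al - ga * v2 + ga * v2 / v1 - be = 0"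
    and h5: "al * u1 - al * u1 / u2 - ga * u2 + ga + de = 0"
    and h6: "al * v1 - al * v1 / v2 - ga * v2 + ga + de = 0"
    and P: "P = (\<lambda>a b. Pbiv N u1 v1 u2 v2 a b x1 x2)"
  shows "real (N - m1 - m2) * (al * (P (m1 + 1) m2 - P m1 m2) - ga * (P m1 (m2 + 1) - P m1 m2))
          + real m1 * be * (P (m1 - 1) m2 - P m1 m2) - real m2 * de * (P m1 (m2 - 1) - P m1 m2)
        = (K1 * real x1 - K2 * real x2) * P m1 m2"
proof -
  define R where "R = Suc N"
  define c1 where "c1 = cc x1 u1 u2"
  define c2 where "c2 = cc x2 v1 v2"
  define D where "D = (\<lambda>n. pochhammer (- real N) n :: real)"
  define T where "T = (\<lambda>(A::real) (B::real) i j k l. pochhammer (-A) (i+j) * pochhammer (-B) (k+l) * c1 i k * c2 j l / D (i+j+k+l))"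
  define A where "A = real m1"
  define B where "B = real m2"
  have PB: "P a b = BS R (T (real a) (real b))" for a b
    unfolding P R_def T_def c1_def c2_def D_def by (simp add: Pbiv_BS)
  have x1R: "x1 < R" and x2R: "x2 < R" using xN unfolding R_def by auto
  have NmAB: "real (N - m1 - m2) = real N - A - B" using mN unfolding A_def B_def by simp

  define G where "G = (\<lambda>i j k l. c1 i k * c2 j l / D (i+j+k+l))"
  have TG: "T A' B' i j k l = pochhammer (-A') (i+j) * pochhammer (-B') (k+l) * G i j k l" for A' B' i j k l
    unfolding T_def G_def by simp

  define H1 where "H1 = (\<lambda>i j k l. - (real N - real (i+j+k+l)) * pochhammer (-A) (i+j) * pochhammer (-B) (k+l) * c2 j l / D (Suc (i+j+k+l)))"
  define H1' where "H1' = (\<lambda>i j k l. - (real N - real (i+j+k+l)) * pochhammer (-A) (i+j) * pochhammer (-B) (k+l) * c1 i k / D (Suc (i+j+k+l)))"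
  define H3 where "H3 = (\<lambda>i j k l. - (pochhammer (-A) (i+j) * pochhammer (-B) (k+l) * c2 j l / D (i+j+k+l)))"
  define H3' where "H3' = (\<lambda>i j k l. - (pochhammer (-A) (i+j) * pochhammer (-B) (k+l) * c1 i k / D (i+j+k+l)))"

  define X1 where "X1 = (\<lambda>i j k l. (real N - real (i+j+k+l) + 1) * pochhammer (-A) (i+j-1) * pochhammer (-B) (k+l) * G i j k l)"
  define X3 where "X3 = (\<lambda>i j k l. pochhammer (-A) (i+j-1) * pochhammer (-B) (Suc (k+l)) * G i j k l)"
  define Y1 where "Y1 = (\<lambda>i j k l. (real N - real (i+j+k+l) + 1) * pochhammer (-A) (i+j) * pochhammer (-B) (k+l-1) * G i j k l)"
  define Y3 where "Y3 = (\<lambda>i j k l. pochhammer (-A) (Suc (i+j)) * pochhammer (-B) (k+l-1) * G i j k l)"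

  have q1i: "real i * c1 i k * H1 (i - 1) j k l = - real i * X1 i j k l" for i j k l
    by (cases i) (simp_all add: H1_def X1_def G_def divide_inverse algebra_simps)
  have q1j: "real j * c2 j l * H1' i (j - 1) k l = - real j * X1 i j k l" for i j k l
    by (cases j) (simp_all add: H1'_def X1_def G_def divide_inverse algebra_simps)
  have q3i: "real i * c1 i k * H3 (i - 1) j (Suc k) l = - real i * X3 i j k l" for i j k l
    by (cases i) (simp_all add: H3_def X3_def G_def divide_inverse algebra_simps)
  have q3j: "real j * c2 j l * H3' i (j - 1) k (Suc l) = - real j * X3 i j k l" for i j k l
    by (cases j) (simp_all add: H3'_def X3_def G_def divide_inverse algebra_simps)
  have r1k: "real k * c1 i k * H1 i j (k - 1) l = - real k * Y1 i j k l" for i j k l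
    by (cases k) (simp_all add: H1_def Y1_def G_def divide_inverse algebra_simps)
  have r1l: "real l * c2 j l * H1' i j k (l - 1) = - real l * Y1 i j k l" for i j k l
    by (cases l) (simp_all add: H1'_def Y1_def G_def divide_inverse algebra_simps)
  have r3k: "real k * c1 i k * H3 (Suc i) j (k - 1) l = - real k * Y3 i j k l" for i j k l
    by (cases k) (simp_all add: H3_def Y3_def G_def divide_inverse algebra_simps)
  have r3l: "real l * c2 j l * H3' i (Suc j) k (l - 1) = - real l * Y3 i j k l" for i j k l
    by (cases l) (simp_all add: H3'_def Y3_def G_def divide_inverse algebra_simps)

  have za: "real (N - m1 - m2) * (T (A+1) B i j k l - T A B i j k l) = - real (i+j) * X1 i j k l - real (i+j) * T A B i j k l - real (i+j) * X3 i j k l" for i j k l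
  proof -
    have pd: "pochhammer (- (A + 1)) (i+j) - pochhammer (- A) (i+j) = - real (i+j) * pochhammer (- A) (i+j - 1)"
      by (rule PD1)
    have sp: "real (i+j) * (real N - A - B) * pochhammer (-A) (i+j - 1) * pochhammer (-B) (k+l)
      = real (i+j) * ((real N - real (i+j) - real (k+l) + 1) * pochhammer (-A) (i+j - 1) * pochhammer (-B) (k+l)
      + pochhammer (-A) (i+j) * pochhammer (-B) (k+l) + pochhammer (-A) (i+j - 1) * pochhammer (-B) (Suc (k+l)))"
      by (rule SPL)
    have "real (N - m1 - m2) * (T (A+1) B i j k l - T A B i j k l)
        = (real N - A - B) * ((pochhammer (- (A + 1)) (i+j) - pochhammer (- A) (i+j)) * pochhammer (-B) (k+l) * G i j k l)"
      unfolding NmAB TG by (simp add: algebra_simps)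
    also have "\<dots> = (real N - A - B) * (- real (i+j) * pochhammer (- A) (i+j - 1) * pochhammer (-B) (k+l) * G i j k l)"
      unfolding pd ..
    also have "\<dots> = - (real (i+j) * (real N - A - B) * pochhammer (-A) (i+j - 1) * pochhammer (-B) (k+l)) * G i j k l"
      by (simp add: algebra_simps)
    also have "\<dots> = - (real (i+j) * ((real N - real (i+j) - real (k+l) + 1) * pochhammer (-A) (i+j - 1) * pochhammer (-B) (k+l)
      + pochhammer (-A) (i+j) * pochhammer (-B) (k+l) + pochhammer (-A) (i+j - 1) * pochhammer (-B) (Suc (k+l)))) * G i j k l"
      unfolding sp ..
    also have "\<dots> = - real (i+j) * X1 i j k l - real (i+j) * T A B i j k l - real (i+j) * X3 i j k l"
      by (simp add: X1_def X3_def TG algebra_simps)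
    finally show ?thesis .
  qed
  have zb: "real (N - m1 - m2) * (T A (B+1) i j k l - T A B i j k l) = - real (k+l) * Y1 i j k l - real (k+l) * T A B i j k l - real (k+l) * Y3 i j k l" for i j k l
  proof -
    have pd: "pochhammer (- (B + 1)) (k+l) - pochhammer (- B) (k+l) = - real (k+l) * pochhammer (- B) (k+l - 1)"
      by (rule PD1)
    have sp: "real (k+l) * (real N - B - A) * pochhammer (-B) (k+l - 1) * pochhammer (-A) (i+j)
      = real (k+l) * ((real N - real (k+l) - real (i+j) + 1) * pochhammer (-B) (k+l - 1) * pochhammer (-A) (i+j)
      + pochhammer (-B) (k+l) * pochhammer (-A) (i+j) + pochhammer (-B) (k+l - 1) * pochhammer (-A) (Suc (i+j)))"
      by (rule SPL)
    have "real (N - m1 - m2) * (T A (B+1) i j k l - T A B i j k l)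
        = (real N - B - A) * ((pochhammer (- (B + 1)) (k+l) - pochhammer (- B) (k+l)) * pochhammer (-A) (i+j) * G i j k l)"
      unfolding NmAB TG by (simp add: algebra_simps)
    also have "\<dots> = (real N - B - A) * (- real (k+l) * pochhammer (- B) (k+l - 1) * pochhammer (-A) (i+j) * G i j k l)"
      unfolding pd ..
    also have "\<dots> = - (real (k+l) * (real N - B - A) * pochhammer (-B) (k+l - 1) * pochhammer (-A) (i+j)) * G i j k l"
      by (simp add: algebra_simps)
    also have "\<dots> = - (real (k+l) * ((real N - real (k+l) - real (i+j) + 1) * pochhammer (-B) (k+l - 1) * pochhammer (-A) (i+j)
      + pochhammer (-B) (k+l) * pochhammer (-A) (i+j) + pochhammer (-B) (k+l - 1) * pochhammer (-A) (Suc (i+j)))) * G i j k l"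
      unfolding sp ..
    also have "\<dots> = - real (k+l) * Y1 i j k l - real (k+l) * T A B i j k l - real (k+l) * Y3 i j k l"
      by (simp add: Y1_def Y3_def TG algebra_simps)
    finally show ?thesis .
  qed
  have zc: "real m1 * (T (real (m1 - 1)) B i j k l - T A B i j k l) = - real (i+j) * T A B i j k l" for i j k l
  proof -
    have "real m1 * (T (real (m1 - 1)) B i j k l - T A B i j k l)
       = (real m1 * (pochhammer (- real (m1 - 1)) (i+j) - pochhammer (- real m1) (i+j))) * pochhammer (-B) (k+l) * G i j k l"
      unfolding TG A_def by (simp add: algebra_simps)
    also have "\<dots> = (- real (i+j) * pochhammer (- real m1) (i+j)) * pochhammer (-B) (k+l) * G i j k l"
      unfolding PD2 ..
    also have "\<dots> = - real (i+j) * T A B i j k l" unfolding TG A_def by (simp add: algebra_simps)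
    finally show ?thesis .
  qed
  have zd: "real m2 * (T A (real (m2 - 1)) i j k l - T A B i j k l) = - real (k+l) * T A B i j k l" for i j k l
  proof -
    have "real m2 * (T A (real (m2 - 1)) i j k l - T A B i j k l)
       = (real m2 * (pochhammer (- real (m2 - 1)) (k+l) - pochhammer (- real m2) (k+l))) * pochhammer (-A) (i+j) * G i j k l"
      unfolding TG B_def by (simp add: algebra_simps)
    also have "\<dots> = (- real (k+l) * pochhammer (- real m2) (k+l)) * pochhammer (-A) (i+j) * G i j k l"
      unfolding PD2 ..
    also have "\<dots> = - real (k+l) * T A B i j k l" unfolding TG B_def by (simp add: algebra_simps)
    finally show ?thesis .
  qed

  have sup1: "(real (i+k) - real x1) * c1 i k * c2 j l = 0" if "N \<le> i+j+k+l" for i j k l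
  proof (cases "x1 < i+k \<or> x2 < j+l")
    case True
    hence "c1 i k = 0 \<or> c2 j l = 0" by (auto simp: c1_def c2_def cc_zero)
    thus ?thesis by auto
  next
    case False
    hence "i + k = x1" using xN that by arith
    thus ?thesis by simp
  qed
  have sup2: "(real (j+l) - real x2) * c1 i k * c2 j l = 0" if "N \<le> i+j+k+l" for i j k l
  proof (cases "x1 < i+k \<or> x2 < j+l")
    case True
    hence "c1 i k = 0 \<or> c2 j l = 0" by (auto simp: c1_def c2_def cc_zero)
    thus ?thesis by auto
  next
    case False
    hence "j + l = x2" using xN that by arith
    thus ?thesis by simp
  qed
  have pw1: "u * (real (i+k) - real x1) * c1 i k * H1 i j k l = u * (real (i+k) - real x1) * T A B i j k l" for u i j k l
  proof -
    have dl: "((real (i+k) - real x1) * c1 i k * c2 j l) * (real N - real (i+j+k+l)) / D (Suc (i+j+k+l))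
       = - ((real (i+k) - real x1) * c1 i k * c2 j l) / D (i+j+k+l)"
      unfolding D_def by (rule DL) (rule sup1)
    have "u * (real (i+k) - real x1) * c1 i k * H1 i j k l
       = - (u * pochhammer (-A) (i+j) * pochhammer (-B) (k+l)) * (((real (i+k) - real x1) * c1 i k * c2 j l) * (real N - real (i+j+k+l)) / D (Suc (i+j+k+l)))"
      by (simp add: H1_def divide_inverse algebra_simps)
    also have "\<dots> = - (u * pochhammer (-A) (i+j) * pochhammer (-B) (k+l)) * (- ((real (i+k) - real x1) * c1 i k * c2 j l) / D (i+j+k+l))"
      unfolding dl ..
    also have "\<dots> = u * (real (i+k) - real x1) * T A B i j k l"
      by (simp add: T_def divide_inverse algebra_simps)
    finally show ?thesis .
  qed
  have pw2: "u * (real (j+l) - real x2) * c2 j l * H1' i j k l = u * (real (j+l) - real x2) * T A B i j k l" for u i j k l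
  proof -
    have dl: "((real (j+l) - real x2) * c1 i k * c2 j l) * (real N - real (i+j+k+l)) / D (Suc (i+j+k+l))
       = - ((real (j+l) - real x2) * c1 i k * c2 j l) / D (i+j+k+l)"
      unfolding D_def by (rule DL) (rule sup2)
    have "u * (real (j+l) - real x2) * c2 j l * H1' i j k l
       = - (u * pochhammer (-A) (i+j) * pochhammer (-B) (k+l)) * (((real (j+l) - real x2) * c1 i k * c2 j l) * (real N - real (i+j+k+l)) / D (Suc (i+j+k+l)))"
      by (simp add: H1'_def divide_inverse algebra_simps)
    also have "\<dots> = - (u * pochhammer (-A) (i+j) * pochhammer (-B) (k+l)) * (- ((real (j+l) - real x2) * c1 i k * c2 j l) / D (i+j+k+l))"
      unfolding dl ..
    also have "\<dots> = u * (real (j+l) - real x2) * T A B i j k l"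
      by (simp add: T_def divide_inverse algebra_simps)
    finally show ?thesis .
  qed
  have pw3: "u * r * c1 i k * H3 i j k l = - (u * r * T A B i j k l)" for u r i j k l
    by (simp add: H3_def T_def divide_inverse algebra_simps)
  have pw4: "u * r * c2 j l * H3' i j k l = - (u * r * T A B i j k l)" for u r i j k l
    by (simp add: H3'_def T_def divide_inverse algebra_simps)

  have e1: "BS R (\<lambda>i j k l. real i * c1 i k * H1 (i - 1) j k l) = BS R (\<lambda>i j k l. u1 * (real (i+k) - real x1) * T A B i j k l)"
  proof -
    have "BS R (\<lambda>i j k l. real i * c1 i k * H1 (i - 1) j k l) = BS R (\<lambda>i j k l. u1 * (real (i+k) - real x1) * c1 i k * H1 i j k l)"
      unfolding c1_def by (rule GI[OF x1R])
    also have "\<dots> = BS R (\<lambda>i j k l. u1 * (real (i+k) - real x1) * T A B i j k l)" by (rule BS_cong) (rule pw1)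
    finally show ?thesis .
  qed
  have e2: "BS R (\<lambda>i j k l. real j * c2 j l * H1' i (j - 1) k l) = BS R (\<lambda>i j k l. v1 * (real (j+l) - real x2) * T A B i j k l)"
  proof -
    have "BS R (\<lambda>i j k l. real j * c2 j l * H1' i (j - 1) k l) = BS R (\<lambda>i j k l. v1 * (real (j+l) - real x2) * c2 j l * H1' i j k l)"
      unfolding c2_def by (rule GJ[OF x2R])
    also have "\<dots> = BS R (\<lambda>i j k l. v1 * (real (j+l) - real x2) * T A B i j k l)" by (rule BS_cong) (rule pw2)
    finally show ?thesis .
  qed
  have e3: "BS R (\<lambda>i j k l. real i * c1 i k * H3 (i - 1) j (Suc k) l) = BS R (\<lambda>i j k l. - (u1 / u2 * real k * T A B i j k l))"
  proof -
    have "BS R (\<lambda>i j k l. real i * c1 i k * H3 (i - 1) j (Suc k) l) = BS R (\<lambda>i j k l. u1 / u2 * real k * c1 i k * H3 i j k l)"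
      unfolding c1_def by (rule GIK[OF x1R nz(2)])
    also have "\<dots> = BS R (\<lambda>i j k l. - (u1 / u2 * real k * T A B i j k l))" by (rule BS_cong) (rule pw3)
    finally show ?thesis .
  qed
  have e4: "BS R (\<lambda>i j k l. real j * c2 j l * H3' i (j - 1) k (Suc l)) = BS R (\<lambda>i j k l. - (v1 / v2 * real l * T A B i j k l))"
  proof -
    have "BS R (\<lambda>i j k l. real j * c2 j l * H3' i (j - 1) k (Suc l)) = BS R (\<lambda>i j k l. v1 / v2 * real l * c2 j l * H3' i j k l)"
      unfolding c2_def by (rule GJL[OF x2R nz(4)])
    also have "\<dots> = BS R (\<lambda>i j k l. - (v1 / v2 * real l * T A B i j k l))" by (rule BS_cong) (rule pw4)
    finally show ?thesis .
  qed
  have e5: "BS R (\<lambda>i j k l. real k * c1 i k * H1 i j (k - 1) l) = BS R (\<lambda>i j k l. u2 * (real (i+k) - real x1) * T A B i j k l)"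
  proof -
    have "BS R (\<lambda>i j k l. real k * c1 i k * H1 i j (k - 1) l) = BS R (\<lambda>i j k l. u2 * (real (i+k) - real x1) * c1 i k * H1 i j k l)"
      unfolding c1_def by (rule GK[OF x1R])
    also have "\<dots> = BS R (\<lambda>i j k l. u2 * (real (i+k) - real x1) * T A B i j k l)" by (rule BS_cong) (rule pw1)
    finally show ?thesis .
  qed
  have e6: "BS R (\<lambda>i j k l. real l * c2 j l * H1' i j k (l - 1)) = BS R (\<lambda>i j k l. v2 * (real (j+l) - real x2) * T A B i j k l)"
  proof -
    have "BS R (\<lambda>i j k l. real l * c2 j l * H1' i j k (l - 1)) = BS R (\<lambda>i j k l. v2 * (real (j+l) - real x2) * c2 j l * H1' i j k l)"
      unfolding c2_def by (rule GL[OF x2R])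
    also have "\<dots> = BS R (\<lambda>i j k l. v2 * (real (j+l) - real x2) * T A B i j k l)" by (rule BS_cong) (rule pw2)
    finally show ?thesis .
  qed
  have e7: "BS R (\<lambda>i j k l. real k * c1 i k * H3 (Suc i) j (k - 1) l) = BS R (\<lambda>i j k l. - (u2 / u1 * real i * T A B i j k l))"
  proof -
    have "BS R (\<lambda>i j k l. real k * c1 i k * H3 (Suc i) j (k - 1) l) = BS R (\<lambda>i j k l. u2 / u1 * real i * c1 i k * H3 i j k l)"
      unfolding c1_def by (rule GKI[OF x1R nz(2) nz(1)])
    also have "\<dots> = BS R (\<lambda>i j k l. - (u2 / u1 * real i * T A B i j k l))" by (rule BS_cong) (rule pw3)
    finally show ?thesis .
  qed
  have e8: "BS R (\<lambda>i j k l. real l * c2 j l * H3' i (Suc j) k (l - 1)) = BS R (\<lambda>i j k l. - (v2 / v1 * real j * T A B i j k l))"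
  proof -
    have "BS R (\<lambda>i j k l. real l * c2 j l * H3' i (Suc j) k (l - 1)) = BS R (\<lambda>i j k l. v2 / v1 * real j * c2 j l * H3' i j k l)"
      unfolding c2_def by (rule GLJ[OF x2R nz(4) nz(3)])
    also have "\<dots> = BS R (\<lambda>i j k l. - (v2 / v1 * real j * T A B i j k l))" by (rule BS_cong) (rule pw4)
    finally show ?thesis .
  qed

  have PBs: "P (m1+1) m2 = BS R (T (A+1) B)" "P m1 m2 = BS R (T A B)" "P m1 (m2+1) = BS R (T A (B+1))"
    "P (m1-1) m2 = BS R (T (real (m1-1)) B)" "P m1 (m2-1) = BS R (T A (real (m2-1)))"
    using PB unfolding A_def B_def by (simp_all add: add.commute)

  have "real (N - m1 - m2) * (al * (P (m1 + 1) m2 - P m1 m2) - ga * (P m1 (m2 + 1) - P m1 m2))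
          + real m1 * be * (P (m1 - 1) m2 - P m1 m2) - real m2 * de * (P m1 (m2 - 1) - P m1 m2)
      = BS R (\<lambda>i j k l. real (N - m1 - m2) * (al * (T (A+1) B i j k l - T A B i j k l) - ga * (T A (B+1) i j k l - T A B i j k l))
          + real m1 * be * (T (real (m1-1)) B i j k l - T A B i j k l) - real m2 * de * (T A (real (m2-1)) i j k l - T A B i j k l))"
    unfolding PBs by (simp only: BS_add BS_diff BS_cmult)
  also have "\<dots> = BS R (\<lambda>i j k l. al * (real i * c1 i k * H1 (i - 1) j k l + real j * c2 j l * H1' i (j - 1) k l - real (i+j) * T A B i j k l
        + real i * c1 i k * H3 (i - 1) j (Suc k) l + real j * c2 j l * H3' i (j - 1) k (Suc l))
      - ga * (real k * c1 i k * H1 i j (k - 1) l + real l * c2 j l * H1' i j k (l - 1) - real (k+l) * T A B i j k l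
        + real k * c1 i k * H3 (Suc i) j (k - 1) l + real l * c2 j l * H3' i (Suc j) k (l - 1))
      - be * (real (i+j) * T A B i j k l) + de * (real (k+l) * T A B i j k l))"
  proof (rule BS_cong)
    fix i j k l
    have "real (N - m1 - m2) * (al * (T (A+1) B i j k l - T A B i j k l) - ga * (T A (B+1) i j k l - T A B i j k l))
          + real m1 * be * (T (real (m1-1)) B i j k l - T A B i j k l) - real m2 * de * (T A (real (m2-1)) i j k l - T A B i j k l)
        = al * (real (N - m1 - m2) * (T (A+1) B i j k l - T A B i j k l)) - ga * (real (N - m1 - m2) * (T A (B+1) i j k l - T A B i j k l))
          + be * (real m1 * (T (real (m1-1)) B i j k l - T A B i j k l)) - de * (real m2 * (T A (real (m2-1)) i j k l - T A B i j k l))"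
      by (simp add: algebra_simps)
    also have "\<dots> = al * (- real (i+j) * X1 i j k l - real (i+j) * T A B i j k l - real (i+j) * X3 i j k l)
        - ga * (- real (k+l) * Y1 i j k l - real (k+l) * T A B i j k l - real (k+l) * Y3 i j k l)
        + be * (- real (i+j) * T A B i j k l) - de * (- real (k+l) * T A B i j k l)"
      unfolding za zb zc zd ..
    also have "\<dots> = al * (real i * c1 i k * H1 (i - 1) j k l + real j * c2 j l * H1' i (j - 1) k l - real (i+j) * T A B i j k l
        + real i * c1 i k * H3 (i - 1) j (Suc k) l + real j * c2 j l * H3' i (j - 1) k (Suc l))
      - ga * (real k * c1 i k * H1 i j (k - 1) l + real l * c2 j l * H1' i j k (l - 1) - real (k+l) * T A B i j k l
        + real k * c1 i k * H3 (Suc i) j (k - 1) l + real l * c2 j l * H3' i (Suc j) k (l - 1))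
      - be * (real (i+j) * T A B i j k l) + de * (real (k+l) * T A B i j k l)"
      unfolding q1i q1j q3i q3j r1k r1l r3k r3l by (simp add: algebra_simps)
    finally show "real (N - m1 - m2) * (al * (T (A+1) B i j k l - T A B i j k l) - ga * (T A (B+1) i j k l - T A B i j k l))
          + real m1 * be * (T (real (m1-1)) B i j k l - T A B i j k l) - real m2 * de * (T A (real (m2-1)) i j k l - T A B i j k l)
        = al * (real i * c1 i k * H1 (i - 1) j k l + real j * c2 j l * H1' i (j - 1) k l - real (i+j) * T A B i j k l
        + real i * c1 i k * H3 (i - 1) j (Suc k) l + real j * c2 j l * H3' i (j - 1) k (Suc l))
      - ga * (real k * c1 i k * H1 i j (k - 1) l + real l * c2 j l * H1' i j k (l - 1) - real (k+l) * T A B i j k l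
        + real k * c1 i k * H3 (Suc i) j (k - 1) l + real l * c2 j l * H3' i (Suc j) k (l - 1))
      - be * (real (i+j) * T A B i j k l) + de * (real (k+l) * T A B i j k l)" .
  qed
  also have "\<dots> = BS R (\<lambda>i j k l. al * (u1 * (real (i+k) - real x1) * T A B i j k l + v1 * (real (j+l) - real x2) * T A B i j k l
        - real (i+j) * T A B i j k l + - (u1 / u2 * real k * T A B i j k l) + - (v1 / v2 * real l * T A B i j k l))
      - ga * (u2 * (real (i+k) - real x1) * T A B i j k l + v2 * (real (j+l) - real x2) * T A B i j k l
        - real (k+l) * T A B i j k l + - (u2 / u1 * real i * T A B i j k l) + - (v2 / v1 * real j * T A B i j k l))
      - be * (real (i+j) * T A B i j k l) + de * (real (k+l) * T A B i j k l))"
    by (simp only: BS_add BS_diff BS_cmult BS_uminus e1 e2 e3 e4 e5 e6 e7 e8)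
  also have "\<dots> = BS R (\<lambda>i j k l. (K1 * real x1 - K2 * real x2) * T A B i j k l)"
  proof (rule BS_cong)
    fix i j k l
    define t where "t = T A B i j k l"
    have "al * (u1 * (real (i+k) - real x1) * t + v1 * (real (j+l) - real x2) * t
        - real (i+j) * t + - (u1 / u2 * real k * t) + - (v1 / v2 * real l * t))
      - ga * (u2 * (real (i+k) - real x1) * t + v2 * (real (j+l) - real x2) * t
        - real (k+l) * t + - (u2 / u1 * real i * t) + - (v2 / v1 * real j * t))
      - be * (real (i+j) * t) + de * (real (k+l) * t)
      = t * (real x1 * (- al * u1 + ga * u2) + real x2 * (- al * v1 + ga * v2)
          + real i * (al * u1 - al - ga * u2 + ga * u2 / u1 - be)
          + real j * (al * v1 - al - ga * v2 + ga * v2 / v1 - be)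
          + real k * (al * u1 - al * u1 / u2 - ga * u2 + ga + de)
          + real l * (al * v1 - al * v1 / v2 - ga * v2 + ga + de))"
      by (simp add: divide_inverse algebra_simps)
    also have "\<dots> = (K1 * real x1 - K2 * real x2) * t"
      unfolding h1 h2 h3 h4 h5 h6 by (simp add: algebra_simps)
    finally show "al * (u1 * (real (i+k) - real x1) * T A B i j k l + v1 * (real (j+l) - real x2) * T A B i j k l
        - real (i+j) * T A B i j k l + - (u1 / u2 * real k * T A B i j k l) + - (v1 / v2 * real l * T A B i j k l))
      - ga * (u2 * (real (i+k) - real x1) * T A B i j k l + v2 * (real (j+l) - real x2) * T A B i j k l
        - real (k+l) * T A B i j k l + - (u2 / u1 * real i * T A B i j k l) + - (v2 / v1 * real j * T A B i j k l))
      - be * (real (i+j) * T A B i j k l) + de * (real (k+l) * T A B i j k l)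
      = (K1 * real x1 - K2 * real x2) * T A B i j k l" unfolding t_def .
  qed
  also have "\<dots> = (K1 * real x1 - K2 * real x2) * P m1 m2"
    unfolding PBs by (rule BS_cmult)
  finally show ?thesis .
qed



lemma params:
  fixes p1 p2 p3 p4 S D a b c d :: real
  assumes NZ: "p1 \<noteq> 0" "p2 \<noteq> 0" "p3 \<noteq> 0" "p4 \<noteq> 0" "S \<noteq> 0" "D \<noteq> 0" "a \<noteq> 0" "b \<noteq> 0"
     "c \<noteq> 0" "d \<noteq> 0" and Dd: "D = p1 * p4 - p2 * p3" and Sd: "S = p1 + p2 + p3 + p4"
   and ad: "a = p1 + p3" and bd: "b = p2 + p4" and cd: "c = p1 + p2" and dd: "d = p3 + p4"
  shows "- (p1 * p3 * b * S / (a * D)) * (c * a / (p1 * S)) + p2 * p4 * a * S / (b * D) * (c * b / (p2 * S)) = c"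
    and "- (p1 * p3 * b * S / (a * D)) * (a * d / (p3 * S)) + p2 * p4 * a * S / (b * D) * (b * d / (p4 * S)) = - d"
    and "p1 * p3 * b * S / (a * D) * (c * a / (p1 * S)) - p1 * p3 * b * S / (a * D)
       - p2 * p4 * a * S / (b * D) * (c * b / (p2 * S))
       + p2 * p4 * a * S / (b * D) * (c * b / (p2 * S)) / (c * a / (p1 * S)) - D / a = 0"
    and "p1 * p3 * b * S / (a * D) * (a * d / (p3 * S)) - p1 * p3 * b * S / (a * D)
       - p2 * p4 * a * S / (b * D) * (b * d / (p4 * S))
       + p2 * p4 * a * S / (b * D) * (b * d / (p4 * S)) / (a * d / (p3 * S)) - D / a = 0"
    and "p1 * p3 * b * S / (a * D) * (c * a / (p1 * S)) - p1 * p3 * b * S / (a * D) * (c * a / (p1 * S)) / (c * b / (p2 * S))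
       - p2 * p4 * a * S / (b * D) * (c * b / (p2 * S)) + p2 * p4 * a * S / (b * D) + D / b = 0"
    and "p1 * p3 * b * S / (a * D) * (a * d / (p3 * S)) - p1 * p3 * b * S / (a * D) * (a * d / (p3 * S)) / (b * d / (p4 * S))
       - p2 * p4 * a * S / (b * D) * (b * d / (p4 * S)) + p2 * p4 * a * S / (b * D) + D / b = 0"
  using NZ
  by (simp_all add: field_simps; unfold Dd Sd ad bd cd dd; simp add: algebra_simps)+

theorem mainTheorem5:
  fixes p1 p2 p3 p4 :: real and N m1 m2 x1 x2 :: nat
  assumes "p1 > 0" "p2 > 0" "p3 > 0" "p4 > 0"
    and "p1 * p4 - p2 * p3 \<noteq> 0"
    and "x1 + x2 \<le> N" and "m1 + m2 \<le> N"
  shows "let \<Delta> = p1 * p4 - p2 * p3; S = p1 + p2 + p3 + p4;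
             u1 = (p1 + p2) * (p1 + p3) / (p1 * S);
             u2 = (p1 + p2) * (p2 + p4) / (p2 * S);
             v1 = (p1 + p3) * (p3 + p4) / (p3 * S);
             v2 = (p2 + p4) * (p3 + p4) / (p4 * S);
             P = (\<lambda>a b. Pbiv N u1 v1 u2 v2 a b x1 x2)
         in real (N - m1 - m2) *
              (p1 * p3 * (p2 + p4) * S / ((p1 + p3) * \<Delta>) * (P (m1 + 1) m2 - P m1 m2)
               - p2 * p4 * (p1 + p3) * S / ((p2 + p4) * \<Delta>) * (P m1 (m2 + 1) - P m1 m2))
            + real m1 * (\<Delta> / (p1 + p3)) * (P (m1 - 1) m2 - P m1 m2)
            - real m2 * (\<Delta> / (p2 + p4)) * (P m1 (m2 - 1) - P m1 m2)
          = ((p1 + p2) * real x1 - (p3 + p4) * real x2) * P m1 m2"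
proof -
  define \<Delta> where "\<Delta> = p1 * p4 - p2 * p3"
  define S where "S = p1 + p2 + p3 + p4"
  define u1 where "u1 = (p1 + p2) * (p1 + p3) / (p1 * S)"
  define u2 where "u2 = (p1 + p2) * (p2 + p4) / (p2 * S)"
  define v1 where "v1 = (p1 + p3) * (p3 + p4) / (p3 * S)"
  define v2 where "v2 = (p2 + p4) * (p3 + p4) / (p4 * S)"
  define P where "P = (\<lambda>a b. Pbiv N u1 v1 u2 v2 a b x1 x2)"
  define al where "al = p1 * p3 * (p2 + p4) * S / ((p1 + p3) * \<Delta>)"
  define ga where "ga = p2 * p4 * (p1 + p3) * S / ((p2 + p4) * \<Delta>)"
  define be where "be = \<Delta> / (p1 + p3)"
  define de where "de = \<Delta> / (p2 + p4)"
  have pos: "p1 > 0" "p2 > 0" "p3 > 0" "p4 > 0" using assms by auto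
  have Sp: "S > 0" "p1 + p3 > 0" "p2 + p4 > 0" "p1 + p2 > 0" "p3 + p4 > 0" using pos unfolding S_def by auto
  have Dn: "\<Delta> \<noteq> 0" using assms unfolding \<Delta>_def by auto
  have nz: "u1 \<noteq> 0" "u2 \<noteq> 0" "v1 \<noteq> 0" "v2 \<noteq> 0" using pos Sp unfolding u1_def u2_def v1_def v2_def by auto
  have NZ: "p1 \<noteq> 0" "p2 \<noteq> 0" "p3 \<noteq> 0" "p4 \<noteq> 0" "S \<noteq> 0" "\<Delta> \<noteq> 0" "p1 + p3 \<noteq> 0" "p2 + p4 \<noteq> 0"
     "p1 + p2 \<noteq> 0" "p3 + p4 \<noteq> 0" using pos Sp Dn by auto
  note hs = params[of p1 p2 p3 p4 S \<Delta> "p1 + p3" "p2 + p4" "p1 + p2" "p3 + p4", OF NZ \<Delta>_def S_def refl refl refl refl]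
  have h1: "- al * u1 + ga * u2 = p1 + p2"
    unfolding al_def ga_def u1_def u2_def by (rule hs(1))
  have h2: "- al * v1 + ga * v2 = - (p3 + p4)"
    unfolding al_def ga_def v1_def v2_def by (rule hs(2))
  have h3: "al * u1 - al - ga * u2 + ga * u2 / u1 - be = 0"
    unfolding al_def ga_def u1_def u2_def be_def by (rule hs(3))
  have h4: "al * v1 - al - ga * v2 + ga * v2 / v1 - be = 0"
    unfolding al_def ga_def v1_def v2_def be_def by (rule hs(4))
  have h5: "al * u1 - al * u1 / u2 - ga * u2 + ga + de = 0"
    unfolding al_def ga_def u1_def u2_def de_def by (rule hs(5))
  have h6: "al * v1 - al * v1 / v2 - ga * v2 + ga + de = 0"
    unfolding al_def ga_def v1_def v2_def de_def by (rule hs(6))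
  have "real (N - m1 - m2) * (al * (P (m1 + 1) m2 - P m1 m2) - ga * (P m1 (m2 + 1) - P m1 m2))
          + real m1 * be * (P (m1 - 1) m2 - P m1 m2) - real m2 * de * (P m1 (m2 - 1) - P m1 m2)
        = ((p1 + p2) * real x1 - (p3 + p4) * real x2) * P m1 m2"
    by (rule core[OF nz assms(6,7) h1 h2 h3 h4 h5 h6 P_def])
  thus ?thesis unfolding Let_def \<Delta>_def S_def u1_def u2_def v1_def v2_def P_def al_def ga_def be_def de_def .
qed


end
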